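(* For all $k,l\in\mathbb{Z}$ and all $0<\xi<1$, $s_{k,l}(\xi)>0$.
   Context: For $0<\xi<1$ let $\mu_\xi(\varphi):=\xi^{-2}+(1-\xi^{-2})\cos\varphi$ and define $s_{k,l}(\xi):=\int_0^{2\pi}\int_0^{2\pi}\frac{e^{-ik\varphi}e^{-il\eta}}{(\mu_\xi(\varphi)-\cos\eta)^{1/2}}\,d\eta\,d\varphi$ for $k,l\in\mathbb{Z}$. *)

theory Defs
  imports "HOL-Analysis.Analysis"
begin

definition mu :: "real \<Rightarrow> real \<Rightarrow> real" where
  "mu \<xi> \<phi> = \<xi> powi (-2) + (1 - \<xi> powi (-2)) * cos \<phi>"

text \<open>Iterated Lebesgue (Bochner) integral over [0,2pi] x [0,2pi], complex-valued.
  For 0 < xi < 1 one has mu xi phi - cos eta \<ge> 0, so the real square root is the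
  principal square root.\<close>
definition s :: "int \<Rightarrow> int \<Rightarrow> real \<Rightarrow> complex" where
  "s k l \<xi> =
     (LINT \<phi>:{0..2*pi}|lborel. LINT \<eta>:{0..2*pi}|lborel.
        exp (- \<i> * of_int k * of_real \<phi>) * exp (- \<i> * of_int l * of_real \<eta>)
        / of_real (sqrt (mu \<xi> \<phi> - cos \<eta>)))"

end

theory Submission
  imports Defs
begin


lemma cos1_gt: "cos (1::real) > 1/2"
proof -
  have "pi > 3" using pi_gt3 .
  hence "1 < pi/3" by simp
  hence "cos (pi/3) < cos 1"
    by (subst cos_mono_less_eq) (use \<open>pi > 3\<close> in auto)
  thus ?thesis by (simp add: cos_60)
qed

lemma sin_lower:
  fixes t :: real assumes "0 \<le> t" "t \<le> pi/2" shows "t / pi \<le> sin t"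
proof (cases "t \<le> 1")
  case True
  have "(\<lambda>x. sin x - x/2) 0 \<le> (\<lambda>x. sin x - x/2) t"
  proof (rule DERIV_nonneg_imp_nondecreasing[OF assms(1)])
    fix x assume x: "0 \<le> x" "x \<le> t"
    have "cos 1 \<le> cos x" using x True pi_gt3 by (subst cos_mono_le_eq) auto
    hence "cos x - 1/2 \<ge> 0" using cos1_gt by linarith
    moreover have "DERIV (\<lambda>x. sin x - x/2) x :> cos x - 1/2"
      by (auto intro!: derivative_eq_intros)
    ultimately show "\<exists>y. DERIV (\<lambda>x. sin x - x / 2) x :> y \<and> 0 \<le> y" by blast
  qed
  hence "t/2 \<le> sin t" by simp
  moreover have "t/pi \<le> t/2" using assms pi_gt3 by (intro divide_left_mono) auto
  ultimately show ?thesis by linarith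
next
  case False
  have "sin 1 \<le> sin t" using False assms pi_gt3 by (intro sin_monotone_2pi_le) auto
  moreover have "1/2 \<le> sin (1::real)"
  proof -
    have "(\<lambda>x::real. sin x - x/2) 0 \<le> (\<lambda>x. sin x - x/2) 1"
    proof (rule DERIV_nonneg_imp_nondecreasing[of 0 1 "\<lambda>x. sin x - x/2"])
      fix x :: real assume x: "0 \<le> x" "x \<le> 1"
      have "cos 1 \<le> cos x" using x pi_gt3 by (subst cos_mono_le_eq) auto
      hence "cos x - 1/2 \<ge> 0" using cos1_gt by linarith
      moreover have "DERIV (\<lambda>x. sin x - x/2) x :> cos x - 1/2"
        by (auto intro!: derivative_eq_intros)
      ultimately show "\<exists>y. DERIV (\<lambda>x. sin x - x / 2) x :> y \<and> 0 \<le> y" by blast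
    qed simp
    thus ?thesis by simp
  qed
  moreover have "t/pi \<le> 1/2" using assms pi_gt3 by (simp add: field_simps)
  ultimately show ?thesis by linarith
qed

lemma one_minus_cos_lower:
  fixes x :: real assumes "0 \<le> x" "x \<le> pi" shows "x^2 / (2*pi^2) \<le> 1 - cos x"
proof -
  have "1 - cos x = 2 * sin (x/2)^2" using cos_double_sin[of "x/2"] by simp
  moreover have "x/2/pi \<le> sin (x/2)" using assms by (intro sin_lower) auto
  hence "(x/2/pi)^2 \<le> sin (x/2)^2" using assms by (intro power_mono) auto
  moreover have "(x/2/pi)^2 = x^2 / (4*pi^2)" by (simp add: power_divide)
  ultimately have "x^2 / (4*pi^2) \<le> sin (x/2)^2" by simp
  moreover have "x^2 / (2*pi^2) = 2 * (x^2 / (4*pi^2))" by simp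
  ultimately show ?thesis using \<open>1 - cos x = 2 * sin (x/2)^2\<close> by linarith
qed

lemma one_minus_cos_lower2:
  fixes x :: real assumes "0 \<le> x" "x \<le> 2*pi"
  shows "(x * (2*pi - x))^2 / (8*pi^4) \<le> 1 - cos x"
proof -
  have m: "x * (2*pi - x) \<le> 2*pi * min x (2*pi - x)"
  proof (cases "x \<le> 2*pi - x")
    case True
    have "x * (2*pi - x) \<le> x * (2*pi)" using assms by (intro mult_left_mono) auto
    thus ?thesis using True by (simp add: min_def mult.commute)
  next
    case False
    have "x * (2*pi - x) \<le> (2*pi) * (2*pi - x)" using assms by (intro mult_right_mono) auto
    thus ?thesis using False by (simp add: min_def)
  qed
  have "min x (2*pi - x)^2 / (2*pi^2) \<le> 1 - cos x"
  proof (cases "x \<le> pi")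
    case True thus ?thesis using one_minus_cos_lower[of x] assms by (simp add: min_def)
  next
    case False
    have "cos x = cos (2*pi - x)" by simp
    thus ?thesis using one_minus_cos_lower[of "2*pi - x"] assms False by (simp add: min_def)
  qed
  moreover have "(x * (2*pi - x))^2 \<le> (2*pi * min x (2*pi - x))^2"
    using m assms by (intro power_mono) auto
  ultimately have "(x * (2*pi - x))^2 / (8*pi^4) \<le> (2*pi * min x (2*pi - x))^2 / (8*pi^4)"
    by (intro divide_right_mono) auto
  also have "\<dots> = min x (2*pi - x)^2 / (2*pi^2)" by (simp add: power_mult_distrib field_simps)
  finally show ?thesis using \<open>min x (2*pi - x)^2 / (2*pi^2) \<le> 1 - cos x\<close> by linarith
qed



lemma powr_half_integrable:
  assumes "c \<ge> 0"
  shows "set_integrable lborel {0..c} (\<lambda>x::real. x powr (-1/2))"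
proof -
  have "(\<lambda>t::real. t powr (-1/2)) integrable_on {0..c}"
    by (rule integrable_on_powr_from_0) (use assms in auto)
  hence "(\<lambda>t::real. t powr (-1/2)) absolutely_integrable_on {0..c}"
    by (subst absolutely_integrable_on_iff_nonneg) auto
  thus ?thesis unfolding set_integrable_def
    by (subst (asm) integrable_completion) auto
qed

lemma powr_half_integrable2:
  assumes "c \<ge> 0"
  shows "set_integrable lborel {0..c} (\<lambda>x::real. (c - x) powr (-1/2))"
proof -
  have "(\<lambda>t::real. t powr (-1/2)) integrable_on {0..c}"
    by (rule integrable_on_powr_from_0) (use assms in auto)
  hence "(\<lambda>t::real. t powr (-1/2)) integrable_on (cbox 0 c)" by simp
  from integrable_affinity[OF this, of "-1" c]
  have "(\<lambda>t. (c - t) powr (-1/2)) integrable_on {0..c}" by simp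
  hence "(\<lambda>t::real. (c - t) powr (-1/2)) absolutely_integrable_on {0..c}"
    by (subst absolutely_integrable_on_iff_nonneg) auto
  thus ?thesis unfolding set_integrable_def
    by (subst (asm) integrable_completion) auto
qed

lemma cos_powr_bound:
  fixes x :: real assumes "0 \<le> x" "x \<le> 2*pi"
  shows "(1 - cos x) powr (-1/4) \<le> (2*pi^2) powr (1/4) * (x powr (-1/2) + (2*pi - x) powr (-1/2))"
proof (cases "cos x = 1")
  case True
  hence "(1 - cos x) powr (-1/4) = 0" by simp
  moreover have "0 \<le> (2*pi^2) powr (1/4) * (x powr (-1/2) + (2*pi - x) powr (-1/2))"
    by (intro mult_nonneg_nonneg add_nonneg_nonneg) auto
  ultimately show ?thesis by linarith
next
  case False
  hence pos: "0 < 1 - cos x" using cos_le_one[of x] by linarith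
  define m where "m = min x (2*pi - x)"
  have mlow: "m^2 / (2*pi^2) \<le> 1 - cos x"
  proof (cases "x \<le> pi")
    case True thus ?thesis using one_minus_cos_lower[of x] assms by (simp add: m_def min_def)
  next
    case False
    have "cos x = cos (2*pi - x)" by simp
    thus ?thesis using one_minus_cos_lower[of "2*pi - x"] assms False by (simp add: m_def min_def)
  qed
  have "m \<noteq> 0"
  proof
    assume "m = 0"
    hence "x = 0 \<or> x = 2*pi" by (auto simp: m_def min_def split: if_splits)
    thus False using False by auto
  qed
  moreover have "m \<ge> 0" using assms by (simp add: m_def)
  ultimately have mpos: "m > 0" by simp
  have "(1 - cos x) powr (-1/4) \<le> (m^2 / (2*pi^2)) powr (-1/4)"
    by (rule powr_mono2') (use mlow mpos in auto)
  also have "\<dots> = (2*pi^2) powr (1/4) * m powr (-1/2)"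
  proof -
    have "(m^2 / (2*pi^2)) powr (-1/4) = (m^2) powr (-1/4) / (2*pi^2) powr (-1/4)"
      by (rule powr_divide)
    also have "(m^2) powr (-1/4) = m powr (-1/2)"
    proof -
      have "m^2 = m powr 2" using mpos by (simp add: powr_numeral)
      hence "(m^2) powr (-1/4) = m powr (2 * (-1/4))" by (simp only: powr_powr)
      thus ?thesis by simp
    qed
    also have "(2*pi^2) powr (-1/4) = inverse ((2*pi^2) powr (1/4))"
    proof -
      have "(-1/4::real) = - (1/4)" by simp
      thus ?thesis by (simp only: powr_minus)
    qed
    finally show ?thesis by (metis divide_inverse inverse_inverse_eq mult.commute)
  qed
  also have "m powr (-1/2) \<le> x powr (-1/2) + (2*pi - x) powr (-1/2)"
  proof -
    have "m = x \<or> m = 2*pi - x" by (auto simp: m_def min_def)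
    moreover have "0 \<le> x powr (-1/2)" "0 \<le> (2*pi - x) powr (-1/2)" by auto
    ultimately show ?thesis by auto
  qed
  hence "(2*pi^2) powr (1/4) * m powr (-1/2) \<le> (2*pi^2) powr (1/4) * (x powr (-1/2) + (2*pi - x) powr (-1/2))"
    by (rule mult_left_mono[OF _ powr_ge_zero])
  finally show ?thesis .
qed

lemma cos_powr_integrable:
  "set_integrable lborel {0..2*pi} (\<lambda>x::real. (1 - cos x) powr (-1/4))"
  unfolding set_integrable_def
proof (rule Bochner_Integration.integrable_bound[OF _ _ AE_I2])
  have "set_integrable lborel {0..2*pi} (\<lambda>x::real. (2*pi^2) powr (1/4) * (x powr (-1/2) + (2*pi - x) powr (-1/2)))"
    using powr_half_integrable[of "2*pi"] powr_half_integrable2[of "2*pi"]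
    by (intro set_integrable_mult_right set_integral_add(1)) auto
  thus "integrable lborel (\<lambda>x. indicat_real {0..2*pi} x *\<^sub>R ((2*pi^2) powr (1/4) * (x powr (-1/2) + (2*pi - x) powr (-1/2))))"
    unfolding set_integrable_def .
next
  fix x :: real
  show "norm (indicat_real {0..2*pi} x *\<^sub>R (1 - cos x) powr (-1/4))
        \<le> norm (indicat_real {0..2*pi} x *\<^sub>R ((2*pi^2) powr (1/4) * (x powr (-1/2) + (2*pi - x) powr (-1/2))))"
    using cos_powr_bound[of x] by (auto simp: indicator_def)
qed measurable



lemma exp_int_integral:
  fixes n :: int
  shows "(LINT x:{0..2*pi}|lborel. exp (\<i> * of_int n * of_real x)) = (if n = 0 then 2*pi else 0)"
proof (cases "n = 0")
  case True
  thus ?thesis by (simp add: set_integral_const scaleR_conv_of_real)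
next
  case False
  define F where "F = (\<lambda>x::real. exp (\<i> * of_int n * of_real x) / (\<i> * of_int n))"
  have "integral\<^sup>L lborel (\<lambda>x. indicator {0 .. 2*pi} x *\<^sub>R exp (\<i> * of_int n * of_real x)) = F (2*pi) - F 0"
  proof (rule integral_FTC_atLeastAtMost)
    fix x :: real
    have "((\<lambda>z. exp (\<i> * of_int n * z) / (\<i> * of_int n)) has_field_derivative exp (\<i> * of_int n * of_real x)) (at (of_real x))"
      using False by (auto intro!: derivative_eq_intros)
    from has_vector_derivative_real_field[OF this]
    show "(F has_vector_derivative exp (\<i> * of_int n * of_real x)) (at x within {0..2*pi})"
      by (simp add: F_def)
  qed (auto intro!: continuous_intros)
  moreover have "F (2*pi) = F 0"
  proof -
    have "exp (\<i> * of_int n * of_real (2*pi)) = exp (of_int n * (2 * pi * \<i>))"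
      by (simp add: mult_ac)
    also have "\<dots> = 1" using exp_2pi_1_int[of n] by (simp add: mult_ac)
    finally show ?thesis by (simp add: F_def)
  qed
  ultimately show ?thesis using False unfolding set_lebesgue_integral_def by simp
qed

definition ek :: "int \<Rightarrow> real \<Rightarrow> complex" where
  "ek k x = exp (- \<i> * of_int k * of_real x)"

definition Ar :: "nat \<Rightarrow> int \<Rightarrow> real" where
  "Ar m k = (\<Sum>j\<le>m. real (m choose j) * (if int (2*j) - int m - k = 0 then 2*pi else 0)) / 2^m"

lemma ek_cos_pow:
  "ek k x * of_real (cos x ^ m) =
     (\<Sum>j\<le>m. of_real (real (m choose j) / 2^m) * exp (\<i> * of_int (int (2*j) - int m - k) * of_real x))"
proof -
  have "of_real (cos x ^ m) = ((exp (\<i> * of_real x) + exp (-(\<i> * of_real x))) / 2) ^ m"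
    by (simp add: cos_exp_eq flip: cos_of_real)
  also have "\<dots> = (\<Sum>j\<le>m. of_nat (m choose j) * exp (\<i> * of_real x) ^ j * exp (-(\<i> * of_real x)) ^ (m - j)) / 2^m"
    by (simp add: power_divide binomial_ring)
  finally have 1: "of_real (cos x ^ m) = \<dots>" .
  have 2: "ek k x * (of_nat (m choose j) * exp (\<i> * of_real x) ^ j * exp (-(\<i> * of_real x)) ^ (m - j)) / 2^m
        = of_real (real (m choose j) / 2^m) * exp (\<i> * of_int (int (2*j) - int m - k) * of_real x)"
    if "j \<in> {..m}" for j
  proof -
    from that have jm: "j \<le> m" by simp
    have "ek k x * (exp (\<i> * of_real x) ^ j * exp (-(\<i> * of_real x)) ^ (m - j))
        = exp (- \<i> * of_int k * of_real x) * (exp (of_nat j * (\<i> * of_real x)) * exp (of_nat (m - j) * (-(\<i> * of_real x))))"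
      unfolding ek_def exp_of_nat_mult by (rule refl)
    also have "\<dots> = exp (- \<i> * of_int k * of_real x + of_nat j * (\<i> * of_real x) + of_nat (m - j) * (-(\<i> * of_real x)))"
      by (simp only: exp_add mult.assoc)
    also have "- \<i> * of_int k * of_real x + of_nat j * (\<i> * of_real x) + of_nat (m - j) * (-(\<i> * of_real x))
             = \<i> * of_int (int (2*j) - int m - k) * of_real x"
      using jm by (simp add: of_nat_diff algebra_simps)
    finally show ?thesis by (simp add: field_simps)
  qed
  have "ek k x * of_real (cos x ^ m) = (\<Sum>j\<le>m. ek k x * (of_nat (m choose j) * exp (\<i> * of_real x) ^ j * exp (-(\<i> * of_real x)) ^ (m - j)) / 2^m)"
    unfolding 1 by (simp add: sum_divide_distrib sum_distrib_left)
  also have "\<dots> = (\<Sum>j\<le>m. of_real (real (m choose j) / 2^m) * exp (\<i> * of_int (int (2*j) - int m - k) * of_real x))"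
    by (rule sum.cong[OF refl 2])
  finally show ?thesis .
qed

lemma A_closed:
  "(LINT x:{0..2*pi}|lborel. ek k x * of_real (cos x ^ m)) = of_real (Ar m k)"
proof -
  have int: "set_integrable lborel {0..2*pi} (\<lambda>x. exp (\<i> * of_int n * of_real x))" for n :: int
    by (rule borel_integrable_atLeastAtMost') (auto intro!: continuous_intros)
  have "(LINT x:{0..2*pi}|lborel. ek k x * of_real (cos x ^ m))
      = (LINT x:{0..2*pi}|lborel. (\<Sum>j\<le>m. of_real (real (m choose j) / 2^m) * exp (\<i> * of_int (int (2*j) - int m - k) * of_real x)))"
    by (simp only: ek_cos_pow)
  also have "\<dots> = (\<Sum>j\<le>m. of_real (real (m choose j) / 2^m) * (LINT x:{0..2*pi}|lborel. exp (\<i> * of_int (int (2*j) - int m - k) * of_real x)))"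
  proof -
    define c where "c j = (of_real (real (m choose j) / 2^m) :: complex)" for j
    define e where "e j x = exp (\<i> * of_int (int (2*j) - int m - k) * of_real x)" for j x
    have "(\<lambda>x. indicator {0..2*pi} x *\<^sub>R (\<Sum>j\<le>m. c j * e j x))
        = (\<lambda>x. \<Sum>j\<le>m. c j * (indicator {0..2*pi} x *\<^sub>R e j x))"
      by (simp add: fun_eq_iff scaleR_sum_right)
    hence "(LINT x:{0..2*pi}|lborel. (\<Sum>j\<le>m. c j * e j x))
        = integral\<^sup>L lborel (\<lambda>x. \<Sum>j\<le>m. c j * (indicator {0..2*pi} x *\<^sub>R e j x))"
      unfolding set_lebesgue_integral_def by (simp only:)
    also have "\<dots> = (\<Sum>j\<le>m. integral\<^sup>L lborel (\<lambda>x. c j * (indicator {0..2*pi} x *\<^sub>R e j x)))"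
      by (rule Bochner_Integration.integral_sum[where f="\<lambda>j x. c j * (indicator {0..2*pi} x *\<^sub>R e j x)"]) (rule integrable_mult_right, unfold e_def, rule int[unfolded set_integrable_def])
    also have "\<dots> = (\<Sum>j\<le>m. c j * (LINT x:{0..2*pi}|lborel. e j x))"
      unfolding set_lebesgue_integral_def by (simp only: integral_mult_right_zero)
    finally have "(LINT x:{0..2*pi}|lborel. (\<Sum>j\<le>m. c j * e j x))
        = (\<Sum>j\<le>m. c j * (LINT x:{0..2*pi}|lborel. e j x))" .
    thus ?thesis by (simp add: c_def e_def)
  qed
  also have "\<dots> = of_real (Ar m k)"
    unfolding exp_int_integral by (simp add: Ar_def sum_divide_distrib)
  finally show ?thesis .
qed



lemma norm_ek [simp]: "norm (ek k x) = 1"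
proof -
  have "ek k x = exp (\<i> * of_real (- (of_int k * x)))" by (simp add: ek_def mult.assoc)
  thus ?thesis by (simp only: norm_exp_i_times)
qed

lemma continuous_on_ek [continuous_intros]: "continuous_on S (ek k)"
  unfolding ek_def by (intro continuous_intros)

lemma continuous_on_ek' [continuous_intros]:
  "continuous_on S f \<Longrightarrow> continuous_on S (\<lambda>x. ek k (f x))"
  unfolding ek_def by (intro continuous_intros)

lemma measurable_ek [measurable]: "ek k \<in> borel_measurable borel"
  by (intro borel_measurable_continuous_onI continuous_on_ek)

lemma Ar_nonneg: "0 \<le> Ar m k"
  unfolding Ar_def by (intro divide_nonneg_nonneg sum_nonneg) auto

lemma Ar_pos: "0 < Ar (nat \<bar>k\<bar>) k"
proof -
  define m where "m = nat \<bar>k\<bar>"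
  define j0 where "j0 = (if k \<ge> 0 then m else 0)"
  have j0: "j0 \<in> {..m}" "int (2*j0) - int m - k = 0"
    by (auto simp: j0_def m_def)
  have "0 < real (m choose j0) * (if int (2*j0) - int m - k = 0 then 2*pi else 0)"
    using j0 by auto
  also have "\<dots> \<le> (\<Sum>j\<le>m. real (m choose j) * (if int (2*j) - int m - k = 0 then 2*pi else 0))"
    by (rule member_le_sum[OF j0(1)]) auto
  finally show ?thesis unfolding Ar_def m_def by simp
qed

definition cc :: "nat \<Rightarrow> real" where "cc n = ((real n - 1/2) gchoose n)"

lemma cc_pos: "0 < cc n"
proof -
  have "cc n = pochhammer (1/2) n / fact n"
    unfolding cc_def gbinomial_pochhammer' by simp
  thus ?thesis by (simp add: pochhammer_pos)
qed

lemma cc_gchoose: "((-(1/2)) gchoose n) * (-t)^n = cc n * t^n"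
proof -
  have "((-(1/2)::real) gchoose n) = (-1)^n * ((1/2 + of_nat n - 1) gchoose n)"
    by (rule gbinomial_minus)
  moreover have "(1/2 + of_nat n - 1 :: real) = real n - 1/2" by simp
  ultimately have g: "((-(1/2)::real) gchoose n) = (-1)^n * cc n" by (simp add: cc_def)
  have tp: "(-t)^n = (-1)^n * t^n" by (rule power_minus)
  have "((-(1/2)) gchoose n) * (-t)^n = cc n * t^n * ((-1)^n * (-1)^n)"
    by (simp only: g tp mult_ac)
  also have "(-1::real)^n * (-1)^n = ((-1) * (-1))^n" by (rule power_mult_distrib[symmetric])
  also have "\<dots> = 1" by simp
  finally show ?thesis by simp
qed

lemma cc_sums: assumes "0 \<le> r" "r < 1" shows "(\<lambda>n. cc n * r^n) sums ((1 - r) powr (-1/2))"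
proof -
  have "(\<lambda>n. ((-(1/2)) gchoose n) * (-r)^n) sums (1 + (-r)) powr (-(1/2))"
    by (rule gen_binomial_real) (use assms in auto)
  hence "(\<lambda>n. cc n * r^n) sums (1 + (-r)) powr (-(1/2))" by (simp only: cc_gchoose)
  moreover have "(1 + (-r)) powr (-(1/2)) = (1 - r) powr (-1/2)" by simp
  ultimately show ?thesis by simp
qed

lemma inv_sqrt_series:
  fixes a t :: real assumes "\<bar>t\<bar> < a"
  shows "(\<lambda>n. cc n * a powr (-(1/2) - real n) * t^n) sums (1 / sqrt (a - t))"
proof -
  have "(\<lambda>n. ((-(1/2)) gchoose n) * a powr (-(1/2) - of_nat n) * (-t)^n) sums (a + (-t)) powr (-(1/2))"
    by (rule gen_binomial_real'') (use assms in auto)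
  moreover have "(a + (-t)) powr (-(1/2)) = 1 / sqrt (a - t)"
  proof -
    have "(a - t) powr (-(1/2)) = inverse ((a - t) powr (1/2))" by (simp only: powr_minus)
    also have "0 \<le> a - t" using assms by linarith
    hence "inverse ((a - t) powr (1/2)) = 1 / sqrt (a - t)" by (simp only: powr_half_sqrt inverse_eq_divide)
    finally show ?thesis by (simp only: diff_conv_add_uminus)
  qed
  moreover have "((-(1/2)) gchoose n) * a powr (-(1/2) - of_nat n) * (-t)^n = cc n * a powr (-(1/2) - real n) * t^n" for n
  proof -
    have "((-(1/2)) gchoose n) * a powr (-(1/2) - of_nat n) * (-t)^n = (((-(1/2)) gchoose n) * (-t)^n) * a powr (-(1/2) - of_nat n)"
      by (simp only: mult_ac)
    also have "\<dots> = cc n * t^n * a powr (-(1/2) - of_nat n)" by (simp only: cc_gchoose)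
    finally show ?thesis by (simp only: mult_ac)
  qed
  ultimately show ?thesis by (simp only:)
qed

lemma LINT_bound:
  fixes f :: "real \<Rightarrow> 'b::{banach, second_countable_topology}"
  assumes "set_integrable lborel {0..2*pi} f" "\<And>x. x \<in> {0..2*pi} \<Longrightarrow> norm (f x) \<le> B"
  shows "norm (LINT x:{0..2*pi}|lborel. f x) \<le> 2*pi*B"
proof -
  have "norm (LINT x:{0..2*pi}|lborel. f x) \<le> integral\<^sup>L lborel (\<lambda>x. norm (indicator {0..2*pi} x *\<^sub>R f x))"
    unfolding set_lebesgue_integral_def by (rule integral_norm_bound)
  also have "\<dots> \<le> integral\<^sup>L lborel (\<lambda>x. indicator {0..2*pi} x *\<^sub>R B)"
  proof (rule integral_mono)
    show "integrable lborel (\<lambda>x. norm (indicator {0..2*pi} x *\<^sub>R f x))"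
      using assms(1) unfolding set_integrable_def by (rule integrable_norm)
    show "integrable lborel (\<lambda>x. indicator {0..2*pi} x *\<^sub>R B)"
      by (rule borel_integrable_compact) auto
    fix x show "norm (indicator {0..2*pi} x *\<^sub>R f x) \<le> indicator {0..2*pi} x *\<^sub>R B"
      using assms(2)[of x] by (auto simp: indicator_def)
  qed
  also have "\<dots> = 2*pi*B" by simp
  finally show ?thesis .
qed



lemma set_integral_sum_fin:
  fixes f :: "'i \<Rightarrow> real \<Rightarrow> complex"
  assumes "\<And>i. i \<in> I \<Longrightarrow> set_integrable lborel S (f i)"
  shows "(LINT x:S|lborel. (\<Sum>i\<in>I. f i x)) = (\<Sum>i\<in>I. LINT x:S|lborel. f i x)"
proof -
  have "(\<lambda>x. indicator S x *\<^sub>R (\<Sum>i\<in>I. f i x)) = (\<lambda>x. \<Sum>i\<in>I. indicator S x *\<^sub>R f i x)"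
    by (simp add: fun_eq_iff scaleR_sum_right)
  hence "(LINT x:S|lborel. (\<Sum>i\<in>I. f i x)) = integral\<^sup>L lborel (\<lambda>x. \<Sum>i\<in>I. indicator S x *\<^sub>R f i x)"
    unfolding set_lebesgue_integral_def by (simp only:)
  also have "\<dots> = (\<Sum>i\<in>I. integral\<^sup>L lborel (\<lambda>x. indicator S x *\<^sub>R f i x))"
    by (rule Bochner_Integration.integral_sum[where f="\<lambda>i x. indicator S x *\<^sub>R f i x"])
       (use assms in \<open>auto simp: set_integrable_def\<close>)
  finally show ?thesis unfolding set_lebesgue_integral_def .
qed

lemma set_integral_sums:
  fixes f :: "nat \<Rightarrow> real \<Rightarrow> complex"
  assumes int: "\<And>i. set_integrable lborel {0..2*pi} (f i)"
    and sums: "\<And>x. x \<in> {0..2*pi} \<Longrightarrow> (\<lambda>i. f i x) sums F x"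
    and bnd: "\<And>i x. x \<in> {0..2*pi} \<Longrightarrow> norm (f i x) \<le> B i"
    and sB: "summable B"
  shows "(\<lambda>i. LINT x:{0..2*pi}|lborel. f i x) sums (LINT x:{0..2*pi}|lborel. F x)"
proof -
  define S where "S = {0..2*pi::real}"
  define g where "g i x = indicator S x *\<^sub>R f i x" for i x
  have gi: "integrable lborel (g i)" for i
    using int[of i] unfolding g_def S_def set_integrable_def by simp
  have Bnn: "0 \<le> B i" for i using bnd[of 0 i] by (auto intro: order_trans[OF norm_ge_zero])
  have gb: "norm (g i x) \<le> B i" for i x
    using bnd[of x i] Bnn[of i] by (auto simp: g_def S_def indicator_def)
  have "AE x in lborel. summable (\<lambda>i. norm (g i x))"
    by (intro AE_I2 summable_comparison_test[OF _ sB]) (auto intro!: exI[of _ 0] gb)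
  moreover have "summable (\<lambda>i. integral\<^sup>L lborel (\<lambda>x. norm (g i x)))"
  proof (rule summable_comparison_test[OF _ summable_mult[OF sB, of "2*pi"]])
    show "\<exists>N. \<forall>n\<ge>N. norm (integral\<^sup>L lborel (\<lambda>x. norm (g n x))) \<le> 2*pi * B n"
    proof (intro exI allI impI)
      fix n :: nat
      have "integral\<^sup>L lborel (\<lambda>x. norm (g n x)) = (LINT x:{0..2*pi}|lborel. norm (f n x))"
        unfolding set_lebesgue_integral_def g_def S_def
        by (intro Bochner_Integration.integral_cong) (auto simp: indicator_def)
      also have "\<dots> \<le> norm (LINT x:{0..2*pi}|lborel. norm (f n x))" by simp
      also have "\<dots> \<le> 2*pi*B n"
        by (rule LINT_bound) (use int[of n] bnd[of _ n] in \<open>auto simp: set_integrable_norm\<close>)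
      finally have "integral\<^sup>L lborel (\<lambda>x. norm (g n x)) \<le> 2*pi*B n" .
      moreover have "0 \<le> integral\<^sup>L lborel (\<lambda>x. norm (g n x))" by simp
      ultimately show "norm (integral\<^sup>L lborel (\<lambda>x. norm (g n x))) \<le> 2*pi * B n" by simp
    qed
  qed
  ultimately have "(\<lambda>i. integral\<^sup>L lborel (g i)) sums integral\<^sup>L lborel (\<lambda>x. \<Sum>i. g i x)"
    by (intro sums_integral gi)
  moreover have "(\<lambda>x. \<Sum>i. g i x) = (\<lambda>x. indicator S x *\<^sub>R F x)"
  proof
    fix x show "(\<Sum>i. g i x) = indicator S x *\<^sub>R F x"
    proof (cases "x \<in> S")
      case True thus ?thesis using sums[of x] by (simp add: g_def S_def sums_iff)
    next
      case False thus ?thesis by (simp add: g_def)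
    qed
  qed
  ultimately show ?thesis unfolding set_lebesgue_integral_def g_def S_def by simp
qed



definition VV :: "real \<Rightarrow> real \<Rightarrow> real \<Rightarrow> real" where
  "VV a \<phi> \<eta> = (a - 1) * cos \<phi> + cos \<eta>"
definition gg :: "real \<Rightarrow> int \<Rightarrow> int \<Rightarrow> real \<Rightarrow> real \<Rightarrow> real \<Rightarrow> complex" where
  "gg a k l r \<phi> \<eta> = ek k \<phi> * ek l \<eta> / of_real (sqrt (a - r * VV a \<phi> \<eta>))"
definition coef :: "real \<Rightarrow> real \<Rightarrow> nat \<Rightarrow> real" where
  "coef a r n = cc n * a powr (-(1/2) - real n) * r^n"
definition tm :: "real \<Rightarrow> int \<Rightarrow> int \<Rightarrow> real \<Rightarrow> nat \<Rightarrow> real \<Rightarrow> real \<Rightarrow> complex" where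
  "tm a k l r n \<phi> \<eta> = of_real (coef a r n) * (ek k \<phi> * (ek l \<eta> * of_real (VV a \<phi> \<eta> ^ n)))"
definition hn :: "real \<Rightarrow> int \<Rightarrow> int \<Rightarrow> real \<Rightarrow> nat \<Rightarrow> real \<Rightarrow> complex" where
  "hn a k l r n \<phi> = of_real (coef a r n) * (ek k \<phi> *
      of_real (\<Sum>j\<le>n. real (n choose j) * (a-1)^j * cos \<phi> ^ j * Ar (n-j) l))"
definition Wn :: "real \<Rightarrow> int \<Rightarrow> int \<Rightarrow> nat \<Rightarrow> real" where
  "Wn a k l n = (\<Sum>j\<le>n. real (n choose j) * (a-1)^j * Ar j k * Ar (n-j) l)"
definition Bn :: "real \<Rightarrow> real \<Rightarrow> nat \<Rightarrow> real" where
  "Bn a r n = cc n * a powr (-(1/2)) * r^n"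

lemma VV_bound: assumes "a > 1" shows "\<bar>VV a \<phi> \<eta>\<bar> \<le> a"
proof -
  have "\<bar>(a - 1) * cos \<phi>\<bar> \<le> (a - 1)"
    using assms abs_cos_le_one[of \<phi>] by (simp add: abs_mult mult_left_le)
  moreover have "\<bar>cos \<eta>\<bar> \<le> 1" by (rule abs_cos_le_one)
  ultimately show ?thesis unfolding VV_def by linarith
qed

lemma tm_sums:
  assumes "a > 1" "0 \<le> r" "r < 1"
  shows "(\<lambda>n. tm a k l r n \<phi> \<eta>) sums gg a k l r \<phi> \<eta>"
proof -
  have "\<bar>r * VV a \<phi> \<eta>\<bar> \<le> r * a"
    using VV_bound[OF assms(1), of \<phi> \<eta>] assms by (simp add: abs_mult mult_left_mono)
  also have "\<dots> < a" using assms by simp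
  finally have "(\<lambda>n. cc n * a powr (-(1/2) - real n) * (r * VV a \<phi> \<eta>)^n) sums (1 / sqrt (a - r * VV a \<phi> \<eta>))"
    by (rule inv_sqrt_series)
  hence "(\<lambda>n. coef a r n * VV a \<phi> \<eta> ^ n) sums (1 / sqrt (a - r * VV a \<phi> \<eta>))"
    by (simp add: coef_def power_mult_distrib mult_ac)
  hence "(\<lambda>n. of_real (coef a r n * VV a \<phi> \<eta> ^ n) :: complex) sums of_real (1 / sqrt (a - r * VV a \<phi> \<eta>))"
    by (simp only: sums_of_real_iff)
  hence "(\<lambda>n. (ek k \<phi> * ek l \<eta>) * of_real (coef a r n * VV a \<phi> \<eta> ^ n)) sums
          ((ek k \<phi> * ek l \<eta>) * of_real (1 / sqrt (a - r * VV a \<phi> \<eta>)))"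
    by (rule sums_mult)
  moreover have "(ek k \<phi> * ek l \<eta>) * of_real (coef a r n * VV a \<phi> \<eta> ^ n) = tm a k l r n \<phi> \<eta>" for n
    by (simp add: tm_def mult_ac)
  moreover have "(ek k \<phi> * ek l \<eta>) * of_real (1 / sqrt (a - r * VV a \<phi> \<eta>)) = gg a k l r \<phi> \<eta>"
    by (simp add: gg_def divide_inverse of_real_inverse)
  ultimately show ?thesis by simp
qed

lemma coef_nonneg: "a > 0 \<Longrightarrow> 0 \<le> r \<Longrightarrow> 0 \<le> coef a r n"
  unfolding coef_def using cc_pos[of n] by auto

lemma tm_norm:
  assumes "a > 1" "0 \<le> r"
  shows "norm (tm a k l r n \<phi> \<eta>) \<le> Bn a r n"
proof -
  have "norm (tm a k l r n \<phi> \<eta>) = coef a r n * \<bar>VV a \<phi> \<eta>\<bar> ^ n"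
    using coef_nonneg[of a r n] assms by (simp add: tm_def norm_mult power_abs norm_power)
  also have "\<dots> \<le> coef a r n * a ^ n"
    using VV_bound[OF assms(1)] coef_nonneg[of a r n] assms
    by (intro mult_left_mono power_mono) auto
  also have "\<dots> = Bn a r n"
  proof -
    have "a powr (-(1/2) - real n) * a ^ n = a powr (-(1/2))"
      using assms by (simp add: powr_diff powr_realpow)
    thus ?thesis unfolding coef_def Bn_def by (simp add: mult_ac)
  qed
  finally show ?thesis .
qed

lemma Bn_summable: assumes "0 \<le> r" "r < 1" shows "summable (Bn a r)"
proof -
  have "summable (\<lambda>n. cc n * r^n)" using cc_sums[OF assms] by (rule sums_summable)
  hence "summable (\<lambda>n. cc n * r^n * a powr (-(1/2)))" by (rule summable_mult2)
  thus ?thesis unfolding Bn_def by (simp add: mult_ac)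
qed

lemma VV_pow:
  "of_real (VV a \<phi> \<eta> ^ n) = (\<Sum>j\<le>n. (of_real (real (n choose j) * (a-1)^j * cos \<phi> ^ j) :: complex) * of_real (cos \<eta> ^ (n-j)))"
proof -
  have "VV a \<phi> \<eta> ^ n = (\<Sum>j\<le>n. real (n choose j) * ((a-1) * cos \<phi>)^j * cos \<eta> ^ (n-j))"
    unfolding VV_def by (rule binomial_ring)
  also have "\<dots> = (\<Sum>j\<le>n. (real (n choose j) * (a-1)^j * cos \<phi> ^ j) * cos \<eta> ^ (n-j))"
    by (simp add: power_mult_distrib mult_ac)
  finally show ?thesis by simp
qed

lemma tm_integrable: "set_integrable lborel {0..2*pi} (tm a k l r n \<phi>)"
  unfolding tm_def VV_def by (rule borel_integrable_atLeastAtMost') (auto intro!: continuous_intros)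

lemma inner_tm: "(LINT \<eta>:{0..2*pi}|lborel. tm a k l r n \<phi> \<eta>) = hn a k l r n \<phi>"
proof -
  define c where "c j = (of_real (real (n choose j) * (a-1)^j * cos \<phi> ^ j) :: complex)" for j
  have "(LINT \<eta>:{0..2*pi}|lborel. tm a k l r n \<phi> \<eta>)
      = of_real (coef a r n) * (ek k \<phi> * (LINT \<eta>:{0..2*pi}|lborel. ek l \<eta> * of_real (VV a \<phi> \<eta> ^ n)))"
    unfolding tm_def by simp
  also have "(LINT \<eta>:{0..2*pi}|lborel. ek l \<eta> * of_real (VV a \<phi> \<eta> ^ n))
      = (LINT \<eta>:{0..2*pi}|lborel. (\<Sum>j\<le>n. c j * (ek l \<eta> * of_real (cos \<eta> ^ (n-j)))))"
    unfolding VV_pow c_def by (simp add: sum_distrib_left mult_ac)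
  also have "\<dots> = (\<Sum>j\<le>n. LINT \<eta>:{0..2*pi}|lborel. c j * (ek l \<eta> * of_real (cos \<eta> ^ (n-j))))"
    by (rule set_integral_sum_fin)
       (auto intro!: borel_integrable_atLeastAtMost' continuous_intros)
  also have "\<dots> = (\<Sum>j\<le>n. c j * of_real (Ar (n-j) l))"
    by (simp only: set_integral_mult_right A_closed)
  also have "\<dots> = of_real (\<Sum>j\<le>n. real (n choose j) * (a-1)^j * cos \<phi> ^ j * Ar (n-j) l)"
    by (simp add: c_def)
  finally show ?thesis unfolding hn_def .
qed

lemma hn_integrable: "set_integrable lborel {0..2*pi} (hn a k l r n)"
  unfolding hn_def by (rule borel_integrable_atLeastAtMost') (auto intro!: continuous_intros)

lemma outer_hn: "(LINT \<phi>:{0..2*pi}|lborel. hn a k l r n \<phi>) = of_real (coef a r n * Wn a k l n)"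
proof -
  define c where "c j = (of_real (real (n choose j) * (a-1)^j * Ar (n-j) l) :: complex)" for j
  have pw: "hn a k l r n \<phi> = of_real (coef a r n) * (\<Sum>j\<le>n. c j * (ek k \<phi> * of_real (cos \<phi> ^ j)))" for \<phi>
    unfolding hn_def c_def by (simp add: sum_distrib_left mult_ac)
  have "(LINT \<phi>:{0..2*pi}|lborel. hn a k l r n \<phi>)
      = of_real (coef a r n) * (LINT \<phi>:{0..2*pi}|lborel. (\<Sum>j\<le>n. c j * (ek k \<phi> * of_real (cos \<phi> ^ j))))"
    unfolding pw by (rule set_integral_mult_right)
  also have "(LINT \<phi>:{0..2*pi}|lborel. (\<Sum>j\<le>n. c j * (ek k \<phi> * of_real (cos \<phi> ^ j))))
      = (\<Sum>j\<le>n. LINT \<phi>:{0..2*pi}|lborel. c j * (ek k \<phi> * of_real (cos \<phi> ^ j)))"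
    by (rule set_integral_sum_fin)
       (auto intro!: borel_integrable_atLeastAtMost' continuous_intros)
  also have "\<dots> = (\<Sum>j\<le>n. c j * of_real (Ar j k))"
    by (simp only: set_integral_mult_right A_closed)
  also have "\<dots> = of_real (Wn a k l n)"
    by (simp add: c_def Wn_def mult_ac)
  finally show ?thesis by simp
qed

definition CC :: "real \<Rightarrow> int \<Rightarrow> int \<Rightarrow> real \<Rightarrow> complex" where
  "CC a k l r = (LINT \<phi>:{0..2*pi}|lborel. LINT \<eta>:{0..2*pi}|lborel. gg a k l r \<phi> \<eta>)"

lemma CC_sums:
  assumes "a > 1" "0 \<le> r" "r < 1"
  shows "(\<lambda>n. of_real (coef a r n * Wn a k l n)) sums CC a k l r"
proof -
  have inner: "(\<lambda>n. hn a k l r n \<phi>) sums (LINT \<eta>:{0..2*pi}|lborel. gg a k l r \<phi> \<eta>)" for \<phi>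
  proof -
    have "(\<lambda>n. LINT \<eta>:{0..2*pi}|lborel. tm a k l r n \<phi> \<eta>) sums (LINT \<eta>:{0..2*pi}|lborel. gg a k l r \<phi> \<eta>)"
      by (rule set_integral_sums[OF tm_integrable tm_sums[OF assms] tm_norm[OF assms(1,2)] Bn_summable[OF assms(2,3)]])
    thus ?thesis by (simp only: inner_tm)
  qed
  have bnd: "norm (hn a k l r n \<phi>) \<le> 2*pi * Bn a r n" for n \<phi>
  proof -
    have "norm (LINT \<eta>:{0..2*pi}|lborel. tm a k l r n \<phi> \<eta>) \<le> 2*pi * Bn a r n"
      by (rule LINT_bound[OF tm_integrable tm_norm[OF assms(1,2)]])
    thus ?thesis by (simp only: inner_tm)
  qed
  have "(\<lambda>n. LINT \<phi>:{0..2*pi}|lborel. hn a k l r n \<phi>) sums CC a k l r"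
    unfolding CC_def
    by (rule set_integral_sums[OF hn_integrable inner bnd summable_mult[OF Bn_summable[OF assms(2,3)]]])
  thus ?thesis by (simp only: outer_hn)
qed

lemma Wn_nonneg: "a \<ge> 1 \<Longrightarrow> 0 \<le> Wn a k l n"
  unfolding Wn_def by (intro sum_nonneg mult_nonneg_nonneg Ar_nonneg) auto

lemma Wn_pos: assumes "a > 1" shows "0 < Wn a k l (nat \<bar>k\<bar> + nat \<bar>l\<bar>)"
proof -
  define N where "N = nat \<bar>k\<bar> + nat \<bar>l\<bar>"
  have "0 < real (N choose nat \<bar>k\<bar>) * (a-1)^(nat \<bar>k\<bar>) * Ar (nat \<bar>k\<bar>) k * Ar (N - nat \<bar>k\<bar>) l"
    using Ar_pos[of k] Ar_pos[of l] assms by (simp add: N_def)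
  also have "\<dots> \<le> Wn a k l N"
    unfolding Wn_def
    by (rule member_le_sum) (use assms in \<open>auto simp: N_def intro!: mult_nonneg_nonneg Ar_nonneg\<close>)
  finally show ?thesis by (simp add: N_def)
qed



lemma am_gm_powr:
  fixes X Y :: real assumes "X > 0" "Y > 0"
  shows "1 / sqrt (X + Y) \<le> X powr (-1/4) * Y powr (-1/4)"
proof -
  have "sqrt (X * Y) \<le> (X + Y) / 2" using assms by (intro arith_geo_mean_sqrt) auto
  also have "\<dots> \<le> X + Y" using assms by simp
  finally have le: "sqrt (X * Y) \<le> X + Y" .
  have sp: "sqrt (X * Y) > 0" using assms by simp
  have "1 / sqrt (X + Y) \<le> 1 / sqrt (sqrt (X * Y))"
    using le sp assms by (intro divide_left_mono real_sqrt_le_mono mult_pos_pos) auto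
  also have "sqrt (sqrt (X * Y)) = (X * Y) powr (1/4)"
  proof -
    have "sqrt (sqrt (X * Y)) = ((X * Y) powr (1/2)) powr (1/2)"
      using assms by (simp add: powr_half_sqrt)
    also have "\<dots> = (X * Y) powr (1/4)" by (simp add: powr_powr)
    finally show ?thesis .
  qed
  also have "1 / (X * Y) powr (1/4) = (X * Y) powr (-1/4)"
  proof -
    have "(-1/4::real) = - (1/4)" by simp
    hence "(X * Y) powr (-1/4) = inverse ((X * Y) powr (1/4))" by (simp only: powr_minus)
    thus ?thesis by (simp add: inverse_eq_divide)
  qed
  also have "\<dots> = X powr (-1/4) * Y powr (-1/4)"
    using assms by (simp add: powr_mult)
  finally show ?thesis .
qed

lemma norm_gg: "0 \<le> a - r * VV a \<phi> \<eta> \<Longrightarrow> norm (gg a k l r \<phi> \<eta>) = 1 / sqrt (a - r * VV a \<phi> \<eta>)"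
  by (simp add: gg_def norm_divide norm_mult)

lemma gg_bound:
  assumes "a > 1" "0 \<le> r" "r \<le> 1" "a - VV a \<phi> \<eta> > 0"
  shows "norm (gg a k l r \<phi> \<eta>) \<le> 1 + 1 / sqrt (a - VV a \<phi> \<eta>)"
proof (cases "VV a \<phi> \<eta> \<ge> 0")
  case True
  have "a - VV a \<phi> \<eta> \<le> a - r * VV a \<phi> \<eta>"
    using True assms mult_right_mono[of r 1 "VV a \<phi> \<eta>"] by simp
  hence "1 / sqrt (a - r * VV a \<phi> \<eta>) \<le> 1 / sqrt (a - VV a \<phi> \<eta>)"
    using assms by (intro divide_left_mono real_sqrt_le_mono mult_pos_pos) auto
  moreover have "0 \<le> a - r * VV a \<phi> \<eta>" using \<open>a - VV a \<phi> \<eta> \<le> a - r * VV a \<phi> \<eta>\<close> assms by linarith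
  ultimately show ?thesis by (simp add: norm_gg)
next
  case False
  have "1 \<le> a - r * VV a \<phi> \<eta>"
    using False assms mult_nonneg_nonneg[of r "- VV a \<phi> \<eta>"] by simp
  hence "1 / sqrt (a - r * VV a \<phi> \<eta>) \<le> 1" by simp
  moreover have "0 \<le> 1 / sqrt (a - VV a \<phi> \<eta>)" using assms by simp
  moreover have "norm (gg a k l r \<phi> \<eta>) = 1 / sqrt (a - r * VV a \<phi> \<eta>)"
    using \<open>1 \<le> a - r * VV a \<phi> \<eta>\<close> by (intro norm_gg) linarith
  ultimately show ?thesis by linarith
qed

lemma VV_gap: "a - VV a \<phi> \<eta> = (a - 1) * (1 - cos \<phi>) + (1 - cos \<eta>)"
  unfolding VV_def by (simp add: algebra_simps)

lemma one_minus_cos_pos: "0 < x \<Longrightarrow> x < 2*pi \<Longrightarrow> 0 < 1 - cos (x::real)"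
proof -
  assume x: "0 < x" "x < 2*pi"
  have "0 < (x * (2*pi - x))^2 / (8*pi^4)" using x by simp
  also have "\<dots> \<le> 1 - cos x" using x by (intro one_minus_cos_lower2) auto
  finally show ?thesis .
qed

lemma gap_pos:
  assumes "a > 1" "0 < \<phi>" "\<phi> < 2*pi"
  shows "0 < a - VV a \<phi> \<eta>"
proof -
  have "0 < (a - 1) * (1 - cos \<phi>)" using assms one_minus_cos_pos[of \<phi>] by simp
  moreover have "0 \<le> 1 - cos \<eta>" by simp
  ultimately show ?thesis unfolding VV_gap by linarith
qed

lemma gapr_pos:
  assumes "a > 1" "0 \<le> r" "r \<le> 1" "0 < a - VV a \<phi> \<eta>"
  shows "0 < a - r * VV a \<phi> \<eta>"
proof (cases "VV a \<phi> \<eta> \<ge> 0")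
  case True
  thus ?thesis using assms mult_right_mono[of r 1 "VV a \<phi> \<eta>"] by simp
next
  case False
  thus ?thesis using assms mult_nonneg_nonneg[of r "- VV a \<phi> \<eta>"] by simp
qed

lemma gg_integrable:
  assumes "a > 1" "0 \<le> r" "r \<le> 1" "0 < \<phi>" "\<phi> < 2*pi"
  shows "set_integrable lborel {0..2*pi} (gg a k l r \<phi>)"
proof -
  have nz: "sqrt (a - r * ((a - 1) * cos \<phi> + cos \<eta>)) \<noteq> 0" for \<eta>
    using gapr_pos[OF assms(1-3) gap_pos[OF assms(1,4,5)], of \<eta>] by (simp add: VV_def)
  have nz': "a \<noteq> r * ((a - 1) * cos \<phi> + cos \<eta>)" for \<eta>
    using gapr_pos[OF assms(1-3) gap_pos[OF assms(1,4,5)], of \<eta>] by (simp add: VV_def)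
  show ?thesis unfolding gg_def VV_def
    by (rule borel_integrable_atLeastAtMost') (auto intro!: continuous_intros simp: nz nz')
qed

lemma inv_gap_integrable:
  assumes "a > 1" "0 < \<phi>" "\<phi> < 2*pi"
  shows "set_integrable lborel {0..2*pi} (\<lambda>\<eta>. 1 + 1 / sqrt (a - VV a \<phi> \<eta>))"
proof -
  have nz: "sqrt (a - ((a - 1) * cos \<phi> + cos \<eta>)) \<noteq> 0" for \<eta>
    using gap_pos[OF assms, of \<eta>] by (simp add: VV_def)
  have nz': "a \<noteq> (a - 1) * cos \<phi> + cos \<eta>" for \<eta>
    using gap_pos[OF assms, of \<eta>] by (simp add: VV_def)
  show ?thesis unfolding VV_def
    by (rule borel_integrable_atLeastAtMost') (auto intro!: continuous_intros simp: nz nz')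
qed

lemma AE_S_interior: "AE x \<in> {0..2*pi} in lborel. 0 < x \<and> x < (2*pi::real)"
proof -
  have "AE x in lborel. x \<noteq> (0::real)" by (rule AE_lborel_singleton)
  moreover have "AE x in lborel. x \<noteq> (2*pi::real)" by (rule AE_lborel_singleton)
  ultimately show ?thesis by eventually_elim auto
qed

lemma G_bound:
  assumes "a > 1" "0 \<le> r" "r \<le> 1" "0 < \<phi>" "\<phi> < 2*pi"
  shows "norm (LINT \<eta>:{0..2*pi}|lborel. gg a k l r \<phi> \<eta>)
         \<le> 2*pi + ((a-1) * (1 - cos \<phi>)) powr (-1/4) * (LINT \<eta>:{0..2*pi}|lborel. (1 - cos \<eta>) powr (-1/4))"
proof -
  define S where "S = {0..2*pi::real}"
  define X where "X = (a-1) * (1 - cos \<phi>)"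
  have Xpos: "X > 0" using assms one_minus_cos_pos[of \<phi>] by (simp add: X_def)
  have gi: "set_integrable lborel S (gg a k l r \<phi>)"
    unfolding S_def by (rule gg_integrable[OF assms])
  have "norm (LINT \<eta>:S|lborel. gg a k l r \<phi> \<eta>) \<le> integral\<^sup>L lborel (\<lambda>\<eta>. norm (indicator S \<eta> *\<^sub>R gg a k l r \<phi> \<eta>))"
    unfolding set_lebesgue_integral_def by (rule integral_norm_bound)
  also have "\<dots> = (LINT \<eta>:S|lborel. norm (gg a k l r \<phi> \<eta>))"
    unfolding set_lebesgue_integral_def
    by (intro Bochner_Integration.integral_cong) (auto simp: indicator_def)
  also have "\<dots> \<le> (LINT \<eta>:S|lborel. 1 + 1 / sqrt (a - VV a \<phi> \<eta>))"
    by (rule set_integral_mono)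
       (use gi inv_gap_integrable[OF assms(1,4,5)] gg_bound[OF assms(1-3) gap_pos[OF assms(1,4,5)]] in
        \<open>auto simp: S_def set_integrable_norm\<close>)
  also have "\<dots> = 2*pi + (LINT \<eta>:S|lborel. 1 / sqrt (a - VV a \<phi> \<eta>))"
  proof -
    have i1: "set_integrable lborel S (\<lambda>\<eta>. 1 / sqrt (a - VV a \<phi> \<eta>))"
    proof -
      have "set_integrable lborel S (\<lambda>\<eta>. (1 + 1 / sqrt (a - VV a \<phi> \<eta>)) - 1)"
        using inv_gap_integrable[OF assms(1,4,5)]
        by (intro set_integral_diff(1)) (auto simp: S_def intro!: borel_integrable_atLeastAtMost')
      thus ?thesis by simp
    qed
    have i0: "set_integrable lborel S (\<lambda>\<eta>. 1::real)"
      unfolding S_def by (rule borel_integrable_atLeastAtMost') auto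
    have "(LINT \<eta>:S|lborel. 1 + 1 / sqrt (a - VV a \<phi> \<eta>)) = (LINT \<eta>:S|lborel. (1::real)) + (LINT \<eta>:S|lborel. 1 / sqrt (a - VV a \<phi> \<eta>))"
      by (rule set_integral_add(2)[OF i0 i1])
    moreover have "(LINT \<eta>:S|lborel. (1::real)) = 2*pi" unfolding S_def by (simp add: set_integral_const)
    ultimately show ?thesis by simp
  qed
  also have "(LINT \<eta>:S|lborel. 1 / sqrt (a - VV a \<phi> \<eta>)) \<le> (LINT \<eta>:S|lborel. X powr (-1/4) * (1 - cos \<eta>) powr (-1/4))"
  proof (rule set_integral_mono_AE)
    show "set_integrable lborel S (\<lambda>\<eta>. 1 / sqrt (a - VV a \<phi> \<eta>))"
    proof -
      have "set_integrable lborel S (\<lambda>\<eta>. (1 + 1 / sqrt (a - VV a \<phi> \<eta>)) - 1)"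
        using inv_gap_integrable[OF assms(1,4,5)]
        by (intro set_integral_diff(1)) (auto simp: S_def intro!: borel_integrable_atLeastAtMost')
      thus ?thesis by simp
    qed
    show "set_integrable lborel S (\<lambda>\<eta>. X powr (-1/4) * (1 - cos \<eta>) powr (-1/4))"
      unfolding S_def using cos_powr_integrable by (rule set_integrable_mult_right)
    show "AE \<eta> \<in> S in lborel. 1 / sqrt (a - VV a \<phi> \<eta>) \<le> X powr (-1/4) * (1 - cos \<eta>) powr (-1/4)"
      using AE_S_interior unfolding S_def
    proof eventually_elim
      case (elim \<eta>)
      show ?case
      proof
        assume "\<eta> \<in> {0..2*pi}"
        hence "0 < 1 - cos \<eta>" using elim one_minus_cos_pos[of \<eta>] by auto
        from am_gm_powr[OF Xpos this]
        show "1 / sqrt (a - VV a \<phi> \<eta>) \<le> X powr (-1/4) * (1 - cos \<eta>) powr (-1/4)"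
          by (simp only: VV_gap X_def)
      qed
    qed
  qed
  also have "(LINT \<eta>:S|lborel. X powr (-1/4) * (1 - cos \<eta>) powr (-1/4)) = X powr (-1/4) * (LINT \<eta>:S|lborel. (1 - cos \<eta>) powr (-1/4))"
    by (rule set_integral_mult_right)
  finally show ?thesis unfolding S_def X_def by simp
qed



lemma gg_meas: "(\<lambda>\<eta>. indicator {0..2*pi} \<eta> *\<^sub>R gg a k l r \<phi> \<eta>) \<in> borel_measurable lborel"
  unfolding gg_def VV_def by measurable

lemma G_meas: "(\<lambda>\<phi>. indicator {0..2*pi} \<phi> *\<^sub>R (LINT \<eta>:{0..2*pi}|lborel. gg a k l r \<phi> \<eta>)) \<in> borel_measurable lborel"
  unfolding gg_def VV_def set_lebesgue_integral_def by measurable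

lemma gg_tendsto:
  assumes "a > 1" "rr \<longlonglongrightarrow> 1" "0 < a - VV a \<phi> \<eta>"
  shows "(\<lambda>m. gg a k l (rr m) \<phi> \<eta>) \<longlonglongrightarrow> gg a k l 1 \<phi> \<eta>"
proof -
  have nz: "complex_of_real (sqrt (a - 1 * VV a \<phi> \<eta>)) \<noteq> 0" using assms(3) by simp
  show ?thesis unfolding gg_def
    by (intro tendsto_intros assms(2) nz)
qed

lemma G_lim:
  assumes "a > 1" "0 < \<phi>" "\<phi> < 2*pi" "rr \<longlonglongrightarrow> 1" "\<And>m. 0 \<le> rr m" "\<And>m. rr m \<le> 1"
  shows "(\<lambda>m. LINT \<eta>:{0..2*pi}|lborel. gg a k l (rr m) \<phi> \<eta>) \<longlonglongrightarrow> (LINT \<eta>:{0..2*pi}|lborel. gg a k l 1 \<phi> \<eta>)"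
  unfolding set_lebesgue_integral_def
proof (rule integral_dominated_convergence[where w="\<lambda>\<eta>. indicator {0..2*pi} \<eta> *\<^sub>R (1 + 1 / sqrt (a - VV a \<phi> \<eta>))"])
  show "(\<lambda>\<eta>. indicator {0..2*pi} \<eta> *\<^sub>R gg a k l 1 \<phi> \<eta>) \<in> borel_measurable lborel" by (rule gg_meas)
  show "\<And>i. (\<lambda>\<eta>. indicator {0..2*pi} \<eta> *\<^sub>R gg a k l (rr i) \<phi> \<eta>) \<in> borel_measurable lborel" by (rule gg_meas)
  show "integrable lborel (\<lambda>\<eta>. indicator {0..2*pi} \<eta> *\<^sub>R (1 + 1 / sqrt (a - VV a \<phi> \<eta>)))"
    using inv_gap_integrable[OF assms(1-3)] unfolding set_integrable_def .
  show "AE \<eta> in lborel. (\<lambda>i. indicator {0..2*pi} \<eta> *\<^sub>R gg a k l (rr i) \<phi> \<eta>) \<longlonglongrightarrow> indicator {0..2*pi} \<eta> *\<^sub>R gg a k l 1 \<phi> \<eta>"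
    by (intro AE_I2 tendsto_scaleR tendsto_const gg_tendsto assms(1,4) gap_pos assms(2,3))
  show "\<And>i. AE \<eta> in lborel. norm (indicator {0..2*pi} \<eta> *\<^sub>R gg a k l (rr i) \<phi> \<eta>) \<le> indicator {0..2*pi} \<eta> *\<^sub>R (1 + 1 / sqrt (a - VV a \<phi> \<eta>))"
  proof (intro AE_I2)
    fix i \<eta>
    show "norm (indicator {0..2*pi} \<eta> *\<^sub>R gg a k l (rr i) \<phi> \<eta>) \<le> indicator {0..2*pi} \<eta> *\<^sub>R (1 + 1 / sqrt (a - VV a \<phi> \<eta>))"
      using gg_bound[OF assms(1) assms(5)[of i] assms(6)[of i] gap_pos[OF assms(1-3)], of k l \<eta>]
      by (auto simp: indicator_def)
  qed
qed

lemma CC_lim: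
  assumes "a > 1" "rr \<longlonglongrightarrow> 1" "\<And>m. 0 \<le> rr m" "\<And>m. rr m \<le> 1"
  shows "(\<lambda>m. CC a k l (rr m)) \<longlonglongrightarrow> CC a k l 1"
proof -
  define K0 where "K0 = (LINT \<eta>:{0..2*pi}|lborel. (1 - cos \<eta>) powr (-1/4::real))"
  define w where "w \<phi> = indicator {0..2*pi} \<phi> *\<^sub>R (2*pi + ((a-1) * (1 - cos \<phi>)) powr (-1/4) * K0)" for \<phi>
  have AEi: "AE \<phi> in lborel. \<phi> \<noteq> 0 \<and> \<phi> \<noteq> (2*pi::real)"
  proof -
    have "AE x in lborel. x \<noteq> (0::real)" by (rule AE_lborel_singleton)
    moreover have "AE x in lborel. x \<noteq> (2*pi::real)" by (rule AE_lborel_singleton)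
    ultimately show ?thesis by eventually_elim auto
  qed
  have wi: "integrable lborel w"
  proof -
    have eq: "((a-1) * (1 - cos \<phi>)) powr (-1/4) * K0 = ((a-1) powr (-1/4) * K0) * (1 - cos \<phi>) powr (-1/4)" for \<phi>
      using assms(1) by (simp add: powr_mult)
    have "set_integrable lborel {0..2*pi} (\<lambda>\<phi>. 2*pi + ((a-1) powr (-1/4) * K0) * (1 - cos \<phi>) powr (-1/4))"
      by (intro set_integral_add(1) set_integrable_mult_right cos_powr_integrable
            borel_integrable_atLeastAtMost') auto
    thus ?thesis unfolding w_def set_integrable_def eq .
  qed
  show ?thesis
    unfolding CC_def set_lebesgue_integral_def[of _ "{0..2*pi}" "\<lambda>\<phi>. LINT \<eta>:{0..2*pi}|lborel. _ \<phi> \<eta>"]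
  proof (rule integral_dominated_convergence[where w=w])
    show "(\<lambda>\<phi>. indicator {0..2*pi} \<phi> *\<^sub>R (LINT \<eta>:{0..2*pi}|lborel. gg a k l 1 \<phi> \<eta>)) \<in> borel_measurable lborel"
      by (rule G_meas)
    show "\<And>i. (\<lambda>\<phi>. indicator {0..2*pi} \<phi> *\<^sub>R (LINT \<eta>:{0..2*pi}|lborel. gg a k l (rr i) \<phi> \<eta>)) \<in> borel_measurable lborel"
      by (rule G_meas)
    show "integrable lborel w" by (rule wi)
    show "AE \<phi> in lborel. (\<lambda>i. indicator {0..2*pi} \<phi> *\<^sub>R (LINT \<eta>:{0..2*pi}|lborel. gg a k l (rr i) \<phi> \<eta>))
             \<longlonglongrightarrow> indicator {0..2*pi} \<phi> *\<^sub>R (LINT \<eta>:{0..2*pi}|lborel. gg a k l 1 \<phi> \<eta>)"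
      using AEi
    proof eventually_elim
      case (elim \<phi>)
      show ?case
      proof (cases "\<phi> \<in> {0..2*pi}")
        case True
        hence "0 < \<phi>" "\<phi> < 2*pi" using elim by auto
        thus ?thesis using True by (simp add: G_lim[OF assms(1) _ _ assms(2-4)])
      qed simp
    qed
    show "\<And>i. AE \<phi> in lborel. norm (indicator {0..2*pi} \<phi> *\<^sub>R (LINT \<eta>:{0..2*pi}|lborel. gg a k l (rr i) \<phi> \<eta>)) \<le> w \<phi>"
    proof -
      fix i
      show "AE \<phi> in lborel. norm (indicator {0..2*pi} \<phi> *\<^sub>R (LINT \<eta>:{0..2*pi}|lborel. gg a k l (rr i) \<phi> \<eta>)) \<le> w \<phi>"
        using AEi
      proof eventually_elim
        case (elim \<phi>)
        show ?case
        proof (cases "\<phi> \<in> {0..2*pi}")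
          case True
          hence "0 < \<phi>" "\<phi> < 2*pi" using elim by auto
          from G_bound[OF assms(1) assms(3)[of i] assms(4)[of i] this, of k l]
          show ?thesis using True by (simp add: w_def K0_def)
        qed (simp add: w_def)
      qed
    qed
  qed
qed



lemma CC_real_lower:
  assumes "a > 1" "0 \<le> r" "r < 1"
  shows "Im (CC a k l r) = 0"
    and "cc (nat \<bar>k\<bar> + nat \<bar>l\<bar>) * a powr (-(1/2) - real (nat \<bar>k\<bar> + nat \<bar>l\<bar>)) * Wn a k l (nat \<bar>k\<bar> + nat \<bar>l\<bar>)
           * r ^ (nat \<bar>k\<bar> + nat \<bar>l\<bar>) \<le> Re (CC a k l r)"
proof -
  define N where "N = nat \<bar>k\<bar> + nat \<bar>l\<bar>"
  define f where "f n = coef a r n * Wn a k l n" for n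
  have S: "(\<lambda>n. complex_of_real (f n)) sums CC a k l r"
    unfolding f_def by (rule CC_sums[OF assms])
  from sums_Im[OF S] have "(\<lambda>n. 0) sums Im (CC a k l r)" by simp
  thus "Im (CC a k l r) = 0" using sums_zero sums_unique2 by blast
  from sums_Re[OF S] have fs: "f sums Re (CC a k l r)" by simp
  have fnn: "0 \<le> f n" for n
    unfolding f_def using coef_nonneg[of a r n] Wn_nonneg[of a k l n] assms by simp
  have "sum f {N} \<le> suminf f"
    by (rule sum_le_suminf) (use fs fnn in \<open>auto simp: sums_iff\<close>)
  hence "f N \<le> Re (CC a k l r)" using fs by (simp add: sums_iff)
  thus "cc (nat \<bar>k\<bar> + nat \<bar>l\<bar>) * a powr (-(1/2) - real (nat \<bar>k\<bar> + nat \<bar>l\<bar>)) * Wn a k l (nat \<bar>k\<bar> + nat \<bar>l\<bar>)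
           * r ^ (nat \<bar>k\<bar> + nat \<bar>l\<bar>) \<le> Re (CC a k l r)"
    unfolding f_def coef_def N_def by (simp add: mult_ac)
qed

lemma s_eq_CC:
  assumes "a = \<xi> powi (-2)"
  shows "s k l \<xi> = CC a k l 1"
proof -
  have "mu \<xi> \<phi> - cos \<eta> = a - 1 * VV a \<phi> \<eta>" for \<phi> \<eta>
    unfolding mu_def VV_def assms by (simp add: algebra_simps)
  thus ?thesis unfolding s_def CC_def gg_def ek_def by simp
qed

theorem mainTheorem5:
  fixes k l :: int and \<xi> :: real
  assumes "0 < \<xi>" and "\<xi> < 1"
  shows "s k l \<xi> \<in> \<real> \<and> Re (s k l \<xi>) > 0"
proof -
  define a where "a = \<xi> powi (-2)"
  have "\<xi>^2 < 1" using assms by (simp add: power_less_one_iff)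
  moreover have "0 < \<xi>^2" using assms by simp
  hence "1 < inverse (\<xi>^2)" using \<open>\<xi>^2 < 1\<close> by (simp add: one_less_inverse)
  hence a1: "a > 1"
    unfolding a_def by (simp add: power_int_minus)
  define rr where "rr m = 1 - inverse (real (Suc m))" for m
  have rr0: "0 \<le> rr m" for m unfolding rr_def by (simp add: field_simps)
  have rr1: "rr m < 1" for m unfolding rr_def by simp
  have rrl: "rr \<longlonglongrightarrow> 1"
    unfolding rr_def using tendsto_diff[OF tendsto_const LIMSEQ_inverse_real_of_nat, of 1] by simp
  have lim: "(\<lambda>m. CC a k l (rr m)) \<longlonglongrightarrow> s k l \<xi>"
    unfolding s_eq_CC[OF a_def] by (rule CC_lim[OF a1 rrl rr0]) (use rr1 less_imp_le in auto)
  define N where "N = nat \<bar>k\<bar> + nat \<bar>l\<bar>"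
  define P where "P = cc N * a powr (-(1/2) - real N) * Wn a k l N"
  have Ppos: "P > 0" unfolding P_def
    using cc_pos[of N] Wn_pos[OF a1, of k l] a1 unfolding N_def
    by (intro mult_pos_pos) auto
  have "(\<lambda>m. Im (CC a k l (rr m))) \<longlonglongrightarrow> Im (s k l \<xi>)" by (rule tendsto_Im[OF lim])
  moreover have "(\<lambda>m. Im (CC a k l (rr m))) = (\<lambda>m. 0)"
    using CC_real_lower(1)[OF a1 rr0 rr1] by auto
  ultimately have "Im (s k l \<xi>) = 0" using LIMSEQ_unique tendsto_const by metis
  moreover have "P \<le> Re (s k l \<xi>)"
  proof (rule LIMSEQ_le)
    show "(\<lambda>m. P * rr m ^ N) \<longlonglongrightarrow> P" using tendsto_mult[OF tendsto_const tendsto_power[OF rrl, of N], of P] by simp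
    show "(\<lambda>m. Re (CC a k l (rr m))) \<longlonglongrightarrow> Re (s k l \<xi>)" by (rule tendsto_Re[OF lim])
    show "\<exists>M. \<forall>m\<ge>M. P * rr m ^ N \<le> Re (CC a k l (rr m))"
      using CC_real_lower(2)[OF a1 rr0 rr1] unfolding P_def N_def by (auto simp: mult_ac)
  qed
  ultimately show ?thesis using Ppos by (simp add: complex_is_Real_iff)
qed


end
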